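(* Let $(\lambda,v)$ be an exact eigenpair of the eigenvalue problem on $V$ (so $\langle v,v\rangle=1$), with $\lambda$ simple, and let $\mathfrak V^{(k)}\subset V$ be a finite-dimensional subspace with Galerkin eigenpairs $(\bar\lambda_j^{(k)},\bar v_j^{(k)})_{j=1}^{N_k}$. Let $i$ be an index such that $1/\bar\lambda_i^{(k)}$ is the closest of the numbers $1/\bar\lambda_j^{(k)}$ to $1/\lambda$, and assume $\delta_\lambda^{(k)}:=\min_{j\neq i}\big|\frac1{\bar\lambda_j^{(k)}}-\frac1\lambda\big|>0$. Let $E_{i,k}:V\to\operatorname{span}\{\bar v_i^{(k)}\}$ be defined by $\langle E_{i,k}w,\bar v_i^{(k)}\rangle=\langle w,\bar v_i^{(k)}\rangle$ for all $w\in V$. Then $$\|E_{i,k}v-v\|\le\sqrt{1+\frac{1}{\lambda_1(\delta_\lambda^{(k)})^2}\eta^2(\mathfrak V^{(k)})}\;\delta_k(\lambda),$$ $$\|E_{i,k}v-v\|_0\le\Big(1+\frac1{\lambda_1\delta_\lambda^{(k)}}\Big)\eta(\mathfrak V^{(k)})\,\|E_{i,k}v-v\|.$$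
   Context: Let $V\subset V_0\subset V^*$ be real Hilbert spaces forming a Gelfand triple ($V^*$ the dual of $V$; the pairing $[\cdot,\cdot]$ between $V^*$ and $V$ extends the inner product of $V_0$, whose norm is $\|\cdot\|_0$; $V_0\to V^*$ compact and dense). $\mathcal L:V\to V^*$ is a symmetric positive linear bijection; $\langle u,w\rangle:=[\mathcal Lu,w]$, $\|u\|^2=\langle u,u\rangle$. (In the paper $V$ is finite-dimensional.) Eigenvalue problem: find $(\lambda,v)\in\mathbb R\times V$ with $\langle v,v\rangle=1$ and $\langle v,w\rangle=\lambda[v,w]$ for all $w\in V$; its eigenvalues are $0<\lambda_1\le\lambda_2\le\cdots$, and $\lambda_1=\min_{0\ne w\in V}\langle w,w\rangle/[w,w]$. $M(\lambda)$ denotes the eigenspace of $\lambda$. For a subspace $\mathfrak V^{(k)}$ with $N_k=\dim\mathfrak V^{(k)}$, the Galerkin problem is: find $(\bar\lambda,\bar v)\in\mathbb R\times\mathfrak V^{(k)}$ with $\langle\bar v,\bar v\rangle=1$ and $\langle\bar v,w\rangle=\bar\lambda[\bar v,w]$ for all $w\in\mathfrak V^{(k)}$; its eigenpairs are $(\bar\lambda_j^{(k)},\bar v_j^{(k)})$, $j=1,\dots,N_k$, with $0<\bar\lambda_1^{(k)}\le\dots\le\bar\lambda_{N_k}^{(k)}$ and $\langle\bar v_i^{(k)},\bar v_j^{(k)}\rangle=\delta_{ij}$. $\eta(\mathfrak V^{(k)}):=\sup_{f\in V_0,\|f\|_0=1}\inf_{w\in\mathfrak V^{(k)}}\|\mathcal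 L^{-1}f-w\|$; $\delta_k(\lambda):=\sup_{u\in M(\lambda),\|u\|=1}\inf_{w\in\mathfrak V^{(k)}}\|u-w\|$. *)

theory Defs
  imports "HOL-Analysis.Analysis"
begin

text \<open>Finite-dimensional setting: V = V_0 is a euclidean space whose inner product
  is the V_0 inner product [.,.]; the energy product is <u,w> = [L u, w].\<close>

definition energy :: "('a::euclidean_space \<Rightarrow> 'a) \<Rightarrow> 'a \<Rightarrow> 'a \<Rightarrow> real" where
  "energy L u w = (L u) \<bullet> w"

definition enorm :: "('a::euclidean_space \<Rightarrow> 'a) \<Rightarrow> 'a \<Rightarrow> real" where
  "enorm L u = sqrt (energy L u u)"

definition admissible_op :: "('a::euclidean_space \<Rightarrow> 'a) \<Rightarrow> bool" where
  "admissible_op L \<longleftrightarrow> linear L \<and> bij L \<and> (\<forall>u w. L u \<bullet> w = u \<bullet> L w)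
     \<and> (\<forall>u. u \<noteq> 0 \<longrightarrow> L u \<bullet> u > 0)"

definition is_eigenpair :: "('a::euclidean_space \<Rightarrow> 'a) \<Rightarrow> real \<Rightarrow> 'a \<Rightarrow> bool" where
  "is_eigenpair L lam v \<longleftrightarrow> energy L v v = 1 \<and> (\<forall>w. energy L v w = lam * (v \<bullet> w))"

definition eigenspace :: "('a::euclidean_space \<Rightarrow> 'a) \<Rightarrow> real \<Rightarrow> 'a set" where
  "eigenspace L lam = {u. \<forall>w. energy L u w = lam * (u \<bullet> w)}"

definition lambda1 :: "('a::euclidean_space \<Rightarrow> 'a) \<Rightarrow> real" where
  "lambda1 L = (INF w\<in>-{0}. energy L w w / (w \<bullet> w))"

definition galerkin_eigenpairs ::
  "('a::euclidean_space \<Rightarrow> 'a) \<Rightarrow> 'a set \<Rightarrow> nat \<Rightarrow> (nat \<Rightarrow> real) \<Rightarrow> (nat \<Rightarrow> 'a) \<Rightarrow> bool" where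
  "galerkin_eigenpairs L S N lb vb \<longleftrightarrow>
     subspace S \<and> N = dim S \<and>
     (\<forall>j\<in>{1..N}. vb j \<in> S \<and> (\<forall>w\<in>S. energy L (vb j) w = lb j * (vb j \<bullet> w))) \<and>
     (\<forall>i\<in>{1..N}. \<forall>j\<in>{1..N}. energy L (vb i) (vb j) = (if i = j then 1 else 0)) \<and>
     (N \<ge> 1 \<longrightarrow> 0 < lb 1) \<and>
     (\<forall>i\<in>{1..N}. \<forall>j\<in>{1..N}. i \<le> j \<longrightarrow> lb i \<le> lb j)"

definition eta :: "('a::euclidean_space \<Rightarrow> 'a) \<Rightarrow> 'a set \<Rightarrow> real" where
  "eta L S = (SUP f\<in>{f. norm f = 1}. INF w\<in>S. enorm L (inv L f - w))"

definition delta_approx :: "('a::euclidean_space \<Rightarrow> 'a) \<Rightarrow> 'a set \<Rightarrow> real \<Rightarrow> real" where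
  "delta_approx L S lam =
     (SUP u\<in>{u\<in>eigenspace L lam. enorm L u = 1}. INF w\<in>S. enorm L (u - w))"

end

theory Submission
  imports Defs
begin

lemma adm_linear: "admissible_op L \<Longrightarrow> linear L"
  by (simp add: admissible_op_def)
lemma adm_sym: "admissible_op L \<Longrightarrow> L u \<bullet> w = L w \<bullet> u"
  unfolding admissible_op_def by (metis inner_commute)
lemma adm_pos: "admissible_op L \<Longrightarrow> u \<noteq> 0 \<Longrightarrow> L u \<bullet> u > 0"
  unfolding admissible_op_def by blast
lemma adm_nonneg: "admissible_op L \<Longrightarrow> L u \<bullet> u \<ge> 0"
  by (metis adm_linear adm_pos inner_zero_right less_le order_refl real_vector.linear_0)
lemma adm_zero: "admissible_op L \<Longrightarrow> L u \<bullet> u = 0 \<Longrightarrow> u = 0"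
  using adm_pos by fastforce
lemma adm_inv: assumes "admissible_op L" shows "linear (inv L)" "L (inv L f) = f"
proof -
  have b: "bij L" using assms by (simp add: admissible_op_def)
  show "linear (inv L)" using b adm_linear[OF assms] by (simp add: bij_is_inj inj_linear_imp_inv_linear)
  show "L (inv L f) = f" using b by (meson bij_inv_eq_iff)
qed

lemma adm_CS: assumes L: "admissible_op L" shows "(L x \<bullet> y)^2 \<le> (L x \<bullet> x) * (L y \<bullet> y)"
proof (cases "y = 0")
  case True then show ?thesis using adm_linear[OF L] by (simp add: real_vector.linear_0)
next
  case False
  have lin: "linear L" using adm_linear[OF L] .
  have yy: "L y \<bullet> y > 0" using adm_pos[OF L False] .
  define t where "t = (L x \<bullet> y) / (L y \<bullet> y)"
  have "0 \<le> L (x - t *\<^sub>R y) \<bullet> (x - t *\<^sub>R y)" using adm_nonneg[OF L] .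
  also have "\<dots> = L x \<bullet> x - 2 * t * (L x \<bullet> y) + t^2 * (L y \<bullet> y)"
    using adm_sym[OF L, of y x]
    by (simp add: real_vector.linear_diff[OF lin] real_vector.linear_scale[OF lin]
        inner_diff_left inner_diff_right power2_eq_square algebra_simps)
  also have "\<dots> = L x \<bullet> x - (L x \<bullet> y)^2 / (L y \<bullet> y)"
    using yy by (simp add: t_def power2_eq_square field_simps)
  finally show ?thesis using yy by (simp add: field_simps)
qed

lemma enorm_nonneg: "admissible_op L \<Longrightarrow> enorm L u \<ge> 0"
  by (simp add: enorm_def energy_def adm_nonneg)

lemma enorm_sq: "admissible_op L \<Longrightarrow> (enorm L u)^2 = L u \<bullet> u"
  by (simp add: enorm_def energy_def adm_nonneg)

lemma adm_CS_abs: assumes L: "admissible_op L" shows "\<bar>L x \<bullet> y\<bar> \<le> enorm L x * enorm L y"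
proof -
  have "\<bar>L x \<bullet> y\<bar> = sqrt ((L x \<bullet> y)^2)" by simp
  also have "\<dots> \<le> sqrt ((L x \<bullet> x) * (L y \<bullet> y))" using adm_CS[OF L] real_sqrt_le_mono by blast
  also have "\<dots> = enorm L x * enorm L y" by (simp add: enorm_def energy_def real_sqrt_mult)
  finally show ?thesis .
qed

lemma enorm_scale: assumes L: "admissible_op L" shows "enorm L (c *\<^sub>R x) = \<bar>c\<bar> * enorm L x"
proof -
  have "L (c *\<^sub>R x) \<bullet> (c *\<^sub>R x) = c^2 * (L x \<bullet> x)"
    by (simp add: real_vector.linear_scale[OF adm_linear[OF L]] power2_eq_square)
  then show ?thesis by (simp add: enorm_def energy_def real_sqrt_mult)
qed

lemma orth_sum:
  assumes "finite K" "\<forall>j\<in>K. \<forall>k\<in>K. p j \<bullet> q k = (if j = k then d j else 0)"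
  shows "(\<Sum>j\<in>K. x j *\<^sub>R p j) \<bullet> (\<Sum>k\<in>K. y k *\<^sub>R q k) = (\<Sum>j\<in>K. x j * y j * d j)"
proof -
  have "(\<Sum>j\<in>K. x j *\<^sub>R p j) \<bullet> (\<Sum>k\<in>K. y k *\<^sub>R q k) = (\<Sum>j\<in>K. \<Sum>k\<in>K. x j * y k * (p j \<bullet> q k))"
    apply (simp add: inner_sum_left inner_sum_right sum_distrib_left mult.assoc)
    apply (subst sum.swap) apply (simp add: mult.left_commute)
    done
  also have "\<dots> = (\<Sum>j\<in>K. \<Sum>k\<in>K. if j = k then x j * y j * d j else 0)"
    using assms(2) by (intro sum.cong refl) auto
  also have "\<dots> = (\<Sum>j\<in>K. x j * y j * d j)" using assms(1) by simp
  finally show ?thesis .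
qed

lemma orth_sum1:
  assumes "finite K" "\<forall>j\<in>K. \<forall>k\<in>K. p j \<bullet> q k = (if j = k then d j else 0)" "k \<in> K"
  shows "(\<Sum>j\<in>K. x j *\<^sub>R p j) \<bullet> q k = x k * d k"
proof -
  have "(\<Sum>j\<in>K. x j *\<^sub>R p j) \<bullet> q k = (\<Sum>j\<in>K. if j = k then x k * d k else 0)"
    unfolding inner_sum_left using assms(2,3) by (intro sum.cong refl) auto
  also have "\<dots> = x k * d k" using assms by simp
  finally show ?thesis .
qed


lemma adm_cont: "admissible_op L \<Longrightarrow> continuous_on A L"
  by (rule linear_continuous_on[OF iffD1[OF linear_conv_bounded_linear adm_linear]])

lemma rayleigh_pos: assumes L: "admissible_op L"
  shows "\<exists>c>0. \<forall>w. c * (w \<bullet> w) \<le> L w \<bullet> w"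
proof -
  have "continuous_on (sphere 0 1) (\<lambda>w. L w \<bullet> w)"
    by (intro continuous_intros adm_cont[OF L])
  moreover have "sphere (0::'a) 1 \<noteq> {}" by simp
  ultimately obtain x where x: "x \<in> sphere 0 1" "\<forall>y\<in>sphere 0 1. L x \<bullet> x \<le> L y \<bullet> y"
    using continuous_attains_inf[OF compact_sphere] by blast
  have x0: "x \<noteq> 0" using x(1) by auto
  have c: "L x \<bullet> x > 0" using adm_pos[OF L x0] .
  have "L x \<bullet> x * (w \<bullet> w) \<le> L w \<bullet> w" for w
  proof (cases "w = 0")
    case True then show ?thesis by simp
  next
    case False
    define u where "u = (1 / norm w) *\<^sub>R w"
    have "u \<in> sphere 0 1" using False by (simp add: u_def)
    hence "L x \<bullet> x \<le> L u \<bullet> u" using x by blast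
    also have "L u \<bullet> u = (L w \<bullet> w) / (norm w)^2"
      by (simp add: u_def real_vector.linear_scale[OF adm_linear[OF L]] power2_eq_square)
    finally show ?thesis using False by (simp add: field_simps power2_norm_eq_inner)
  qed
  then show ?thesis using c by blast
qed

lemma lambda1_le: assumes L: "admissible_op L" and w: "w \<noteq> 0"
  shows "lambda1 L \<le> L w \<bullet> w / (w \<bullet> w)"
  unfolding lambda1_def energy_def
proof (rule cINF_lower)
  show "bdd_below ((\<lambda>w. L w \<bullet> w / (w \<bullet> w)) ` (- {0}))"
    by (rule bdd_belowI[of _ 0]) (auto intro!: divide_nonneg_nonneg adm_nonneg[OF L])
qed (use w in auto)

lemma lambda1_pos: assumes L: "admissible_op L" shows "0 < lambda1 L"
proof -
  obtain c where c: "c > 0" "\<forall>w. c * (w \<bullet> w) \<le> L w \<bullet> w" using rayleigh_pos[OF L] by blast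
  obtain b :: 'a where b: "b \<in> Basis" using nonempty_Basis by blast
  have "c \<le> lambda1 L"
    unfolding lambda1_def energy_def
  proof (rule cINF_greatest)
    show "- {0} \<noteq> ({}::'a set)" using b by (metis ComplI nonzero_Basis singletonD empty_iff)
    fix w :: 'a assume "w \<in> - {0}"
    hence "w \<bullet> w > 0" by simp
    then show "c \<le> L w \<bullet> w / (w \<bullet> w)" using c(2)[rule_format, of w] by (simp add: field_simps)
  qed
  then show ?thesis using c by linarith
qed

lemma eta_bdd: assumes L: "admissible_op L" and S: "subspace S"
  shows "bdd_above ((\<lambda>f. INF w\<in>S. enorm L (inv L f - w)) ` {f. norm f = 1})"
proof -
  have "continuous_on (sphere 0 1) (\<lambda>f. enorm L (inv L f))"
  proof -
    have c1: "continuous_on UNIV (inv L)"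
      by (rule linear_continuous_on[OF iffD1[OF linear_conv_bounded_linear adm_inv(1)[OF L]]])
    have c2: "continuous_on UNIV L" by (rule adm_cont[OF L])
    have "continuous_on (sphere 0 1) (L \<circ> inv L)"
      by (rule continuous_on_compose[OF continuous_on_subset[OF c1] continuous_on_subset[OF c2]]) auto
    then have "continuous_on (sphere 0 1) (\<lambda>f. L (inv L f))" unfolding comp_def .
    moreover have "continuous_on (sphere 0 1) (inv L)" using continuous_on_subset[OF c1] by blast
    ultimately have "continuous_on (sphere 0 1) (\<lambda>f. L (inv L f) \<bullet> inv L f)"
      by (rule continuous_on_inner)
    then show ?thesis unfolding enorm_def energy_def by (rule continuous_on_real_sqrt)
  qed
  then have "\<exists>x\<in>sphere 0 1. \<forall>y\<in>sphere 0 1. enorm L (inv L y) \<le> enorm L (inv L x)"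
    by (intro continuous_attains_sup[OF compact_sphere]) simp_all
  then obtain x where x: "x \<in> sphere 0 1" "\<forall>y\<in>sphere 0 1. enorm L (inv L y) \<le> enorm L (inv L x)"
    by blast
  show ?thesis
  proof (rule bdd_aboveI[of _ "enorm L (inv L x)"])
    fix r assume "r \<in> (\<lambda>f. INF w\<in>S. enorm L (inv L f - w)) ` {f. norm f = 1}"
    then obtain f where f: "norm f = 1" "r = (INF w\<in>S. enorm L (inv L f - w))" by blast
    have "r \<le> enorm L (inv L f - 0)" unfolding f(2)
      by (rule cINF_lower) (auto intro: bdd_belowI[of _ 0] enorm_nonneg[OF L] subspace_0[OF S])
    also have "\<dots> \<le> enorm L (inv L x)" using x f by simp
    finally show "r \<le> enorm L (inv L x)" .
  qed
qed

lemma INF_nonneg: assumes L: "admissible_op L" and S: "subspace S"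
  shows "0 \<le> (INF w\<in>S. enorm L (u - w))"
  by (rule cINF_greatest) (auto intro: enorm_nonneg[OF L] subspace_0[OF S])

lemma eta_nonneg: assumes L: "admissible_op L" and S: "subspace S"
  shows "0 \<le> eta L S"
proof -
  obtain b :: 'a where b: "b \<in> Basis" using nonempty_Basis by blast
  have "0 \<le> (INF w\<in>S. enorm L (inv L b - w))" by (rule INF_nonneg[OF L S])
  also have "\<dots> \<le> eta L S" unfolding eta_def
    by (rule cSUP_upper[OF _ eta_bdd[OF L S]]) (use b in auto)
  finally show ?thesis .
qed


lemma aubin_nitsche: assumes L: "admissible_op L" and S: "subspace S"
    and orth: "\<forall>w\<in>S. L g \<bullet> w = 0"
  shows "norm g \<le> eta L S * enorm L g"
proof (cases "g = 0")
  case True then show ?thesis using eta_nonneg[OF L S] enorm_nonneg[OF L] by simp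
next
  case False
  have lin: "linear L" by (rule adm_linear[OF L])
  have linT: "linear (inv L)" by (rule adm_inv(1)[OF L])
  have ng: "norm g > 0" using False by simp
  have eg: "enorm L g > 0"
    using enorm_nonneg[OF L, of g] adm_zero[OF L, of g] False enorm_sq[OF L, of g]
    by (metis less_eq_real_def power_zero_numeral)
  define f where "f = (1 / norm g) *\<^sub>R g"
  have nf: "norm f = 1" using False by (simp add: f_def)
  have Tg: "inv L g = norm g *\<^sub>R inv L f"
    using False by (simp add: f_def real_vector.linear_scale[OF linT])
  have key: "norm g / enorm L g \<le> enorm L (inv L f - w)" if w: "w \<in> S" for w
  proof -
    have ww: "norm g *\<^sub>R w \<in> S" using S w by (simp add: subspace_scale)
    have "L (inv L g - norm g *\<^sub>R w) \<bullet> g = g \<bullet> g - L (norm g *\<^sub>R w) \<bullet> g"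
      by (simp add: real_vector.linear_diff[OF lin] adm_inv(2)[OF L] inner_diff_left)
    also have "L (norm g *\<^sub>R w) \<bullet> g = L g \<bullet> (norm g *\<^sub>R w)" by (rule adm_sym[OF L])
    also have "\<dots> = 0" using orth ww by blast
    finally have "(norm g)^2 = L (inv L g - norm g *\<^sub>R w) \<bullet> g" by (simp add: power2_norm_eq_inner)
    also have "\<dots> \<le> enorm L (inv L g - norm g *\<^sub>R w) * enorm L g"
      using adm_CS_abs[OF L] abs_le_D1 by blast
    also have "inv L g - norm g *\<^sub>R w = norm g *\<^sub>R (inv L f - w)"
      by (simp add: Tg scaleR_diff_right)
    also have "enorm L \<dots> = norm g * enorm L (inv L f - w)" by (simp add: enorm_scale[OF L])
    finally have "norm g * norm g \<le> norm g * (enorm L (inv L f - w) * enorm L g)"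
      by (simp add: power2_eq_square mult.assoc)
    hence "norm g \<le> enorm L (inv L f - w) * enorm L g" using ng by simp
    then show ?thesis using eg by (simp add: field_simps)
  qed
  have "norm g / enorm L g \<le> (INF w\<in>S. enorm L (inv L f - w))"
    by (rule cINF_greatest) (use key subspace_0[OF S] in auto)
  also have "\<dots> \<le> eta L S" unfolding eta_def
    by (rule cSUP_upper[OF _ eta_bdd[OF L S]]) (use nf in auto)
  finally show ?thesis using eg by (simp add: field_simps)
qed

theorem lemma3:
  fixes L :: "'a::euclidean_space \<Rightarrow> 'a"
    and lam :: real and v :: 'a
    and S :: "'a set" and N :: nat and lb :: "nat \<Rightarrow> real" and vb :: "nat \<Rightarrow> 'a"
    and i :: nat and E :: "'a \<Rightarrow> 'a"
  assumes L: "admissible_op L"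
    and eig: "is_eigenpair L lam v"
    and simple: "dim (eigenspace L lam) = 1"
    and gal: "galerkin_eigenpairs L S N lb vb"
    and N2: "2 \<le> N"
    and i: "i \<in> {1..N}"
    and closest: "\<forall>j\<in>{1..N}. \<bar>1 / lb i - 1 / lam\<bar> \<le> \<bar>1 / lb j - 1 / lam\<bar>"
    and gap: "Min {\<bar>1 / lb j - 1 / lam\<bar> | j. j \<in> {1..N} \<and> j \<noteq> i} > 0"
    and E: "\<forall>w. E w \<in> span {vb i} \<and> energy L (E w) (vb i) = energy L w (vb i)"
  shows "enorm L (E v - v)
           \<le> sqrt (1 + (eta L S)\<^sup>2 / (lambda1 L * (Min {\<bar>1 / lb j - 1 / lam\<bar> | j. j \<in> {1..N} \<and> j \<noteq> i})\<^sup>2))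
              * delta_approx L S lam
       \<and> norm (E v - v)
           \<le> (1 + 1 / (lambda1 L * Min {\<bar>1 / lb j - 1 / lam\<bar> | j. j \<in> {1..N} \<and> j \<noteq> i}))
              * eta L S * enorm L (E v - v)"
proof -
  define K where "K = {1..N}"
  define J where "J = K - {i}"
  define dl where "dl = Min {\<bar>1 / lb j - 1 / lam\<bar> | j. j \<in> {1..N} \<and> j \<noteq> i}"
  define l1 where "l1 = lambda1 L"
  define et where "et = eta L S"
  have lin: "linear L" by (rule adm_linear[OF L])
  have finK: "finite K" and finJ: "finite J" and JK: "J \<subseteq> K" and iK: "i \<in> K"
    using i by (auto simp: K_def J_def)
  note G = gal[unfolded galerkin_eigenpairs_def energy_def, folded K_def]
  have subS: "subspace S" using conjunct1[OF G] .
  have dimS: "N = dim S" using conjunct1[OF conjunct2[OF G]] .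
  have C: "\<forall>j\<in>K. vb j \<in> S \<and> (\<forall>w\<in>S. L (vb j) \<bullet> w = lb j * (vb j \<bullet> w))"
    using conjunct1[OF conjunct2[OF conjunct2[OF G]]] .
  have orthE: "\<forall>j\<in>K. \<forall>k\<in>K. L (vb j) \<bullet> vb k = (if j = k then 1 else 0)"
    using conjunct1[OF conjunct2[OF conjunct2[OF conjunct2[OF G]]]] .
  have vbS: "\<forall>j\<in>K. vb j \<in> S" using C by blast
  have galeq: "\<forall>j\<in>K. \<forall>w\<in>S. L (vb j) \<bullet> w = lb j * (vb j \<bullet> w)" using C by blast
  have eigv: "\<forall>w. L v \<bullet> w = lam * (v \<bullet> w)" and vv: "L v \<bullet> v = 1"
    using eig unfolding is_eigenpair_def energy_def by auto
  have lam0: "lam \<noteq> 0" using eigv vv by (metis mult_zero_left zero_neq_one)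
  have vbvb: "L (vb j) \<bullet> vb j = 1" if "j \<in> K" for j
    using orthE that by simp
  have vb0: "vb j \<noteq> 0" if "j \<in> K" for j
  proof
    assume "vb j = 0"
    then have "L (vb j) \<bullet> vb j = 0" by simp
    then show False using vbvb[OF that] by simp
  qed
  have lbinv: "lb j * (vb j \<bullet> vb j) = 1" if "j \<in> K" for j
  proof -
    have "L (vb j) \<bullet> vb j = lb j * (vb j \<bullet> vb j)" using galeq vbS that by blast
    then show ?thesis using vbvb[OF that] by simp
  qed
  have lbpos: "lb j > 0" if "j \<in> K" for j
  proof -
    have "vb j \<bullet> vb j > 0" using vb0[OF that] by simp
    then show ?thesis using lbinv[OF that] by (metis zero_less_mult_pos2 zero_less_one)
  qed
  have l1pos: "l1 > 0" unfolding l1_def by (rule lambda1_pos[OF L])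
  have l1lb: "l1 \<le> lb j" if "j \<in> K" for j
  proof -
    have "l1 \<le> L (vb j) \<bullet> vb j / (vb j \<bullet> vb j)" unfolding l1_def by (rule lambda1_le[OF L vb0[OF that]])
    also have "\<dots> = lb j"
    proof -
      have "vb j \<bullet> vb j \<noteq> 0" using vb0[OF that] by simp
      then show ?thesis using vbvb[OF that] lbinv[OF that] by (simp add: divide_simps)
    qed
    finally show ?thesis .
  qed
  have orth0: "\<forall>j\<in>K. \<forall>k\<in>K. vb j \<bullet> vb k = (if j = k then 1 / lb j else 0)"
  proof (intro ballI)
    fix j k assume jk: "j \<in> K" "k \<in> K"
    have "L (vb j) \<bullet> vb k = lb j * (vb j \<bullet> vb k)" using galeq vbS jk by blast
    moreover have "L (vb j) \<bullet> vb k = (if j = k then 1 else 0)" using orthE jk by blast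
    moreover have "lb j \<noteq> 0" using lbpos[OF jk(1)] by simp
    ultimately show "vb j \<bullet> vb k = (if j = k then 1 / lb j else 0)"
      by (cases "j = k") (simp_all add: eq_divide_eq mult.commute)
  qed
  have orthL: "\<forall>j\<in>K. \<forall>k\<in>K. (L \<circ> vb) j \<bullet> vb k = (if j = k then 1 else 0)"
    using orthE by simp
  define c where "c j = L v \<bullet> vb j" for j
  define Pv where "Pv = (\<Sum>j\<in>K. c j *\<^sub>R vb j)"
  define h where "h = (\<Sum>j\<in>J. c j *\<^sub>R vb j)"
  define g where "g = v - Pv"
  have Ev: "E v = c i *\<^sub>R vb i"
  proof -
    obtain a where a: "E v = a *\<^sub>R vb i" using E span_singleton by blast
    have "L (E v) \<bullet> vb i = L v \<bullet> vb i" using E unfolding energy_def by blast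
    then have "a = c i" using orthE iK by (simp add: a c_def real_vector.linear_scale[OF lin])
    then show ?thesis using a by simp
  qed
  have Pvsplit: "Pv = c i *\<^sub>R vb i + h"
    unfolding Pv_def h_def J_def using finK iK by (simp add: sum.remove)
  have eq: "E v - v = (-1) *\<^sub>R (g + h)"
    unfolding g_def using Ev Pvsplit by simp
  have LPv: "L Pv \<bullet> vb k = c k" if "k \<in> K" for k
  proof -
    have "L Pv = (\<Sum>j\<in>K. c j *\<^sub>R (L \<circ> vb) j)"
      unfolding Pv_def by (simp add: real_vector.linear_sum[OF lin] real_vector.linear_scale[OF lin])
    then show ?thesis using orth_sum1[OF finK orthL that, of c] by simp
  qed
  have F1: "L g \<bullet> vb k = 0" if "k \<in> K" for k
    using LPv[OF that] by (simp add: g_def real_vector.linear_diff[OF lin] inner_diff_left c_def)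
  have inj: "inj_on vb K"
  proof (rule inj_onI)
    fix j k assume jk: "j \<in> K" "k \<in> K" "vb j = vb k"
    have o1: "L (vb j) \<bullet> vb k = (if j = k then 1 else 0)" using orthE jk(1,2) by blast
    have o2: "L (vb j) \<bullet> vb j = 1" using orthE jk(1) by simp
    show "j = k" using o1 o2 jk(3) by (auto split: if_splits)
  qed
  have indep: "independent (vb ` K)"
  proof
    assume "dependent (vb ` K)"
    then obtain u where u: "\<exists>x\<in>vb ` K. u x \<noteq> 0" "(\<Sum>x\<in>vb ` K. u x *\<^sub>R x) = 0"
      using dependent_finite[of "vb ` K"] finK by blast
    have s0: "(\<Sum>j\<in>K. u (vb j) *\<^sub>R vb j) = 0"
      using u(2) by (simp add: sum.reindex[OF inj])
    obtain k where k: "k \<in> K" "u (vb k) \<noteq> 0" using u(1) by blast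
    have "L (\<Sum>j\<in>K. u (vb j) *\<^sub>R vb j) = (\<Sum>j\<in>K. u (vb j) *\<^sub>R (L \<circ> vb) j)"
      by (simp add: real_vector.linear_sum[OF lin] real_vector.linear_scale[OF lin])
    then have "L (\<Sum>j\<in>K. u (vb j) *\<^sub>R vb j) \<bullet> vb k = u (vb k) * 1"
      using orth_sum1[OF finK orthL k(1), of "\<lambda>j. u (vb j)"] by simp
    then show False using s0 k(2) real_vector.linear_0[OF lin] by simp
  qed
  have cardK: "card (vb ` K) = dim S"
    using inj dimS by (simp add: card_image K_def)
  have Sspan: "S \<subseteq> span (vb ` K)"
    using card_eq_dim[of "vb ` K" S] vbS cardK finK indep by blast
  have F2: "\<forall>w\<in>S. L g \<bullet> w = 0"
  proof
    fix w assume "w \<in> S"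
    then have "w \<in> span (vb ` K)" using Sspan by blast
    then show "L g \<bullet> w = 0"
    proof (rule span_induct)
      show "subspace {w. L g \<bullet> w = 0}"
        by (auto simp: subspace_def inner_add_right)
    qed (use F1 in auto)
  qed
  have hS: "h \<in> S" unfolding h_def using vbS JK subS
    by (intro subspace_sum subspace_scale) auto
  have PvS: "Pv \<in> S" unfolding Pv_def using vbS subS
    by (intro subspace_sum subspace_scale) auto
  have Lgh: "L g \<bullet> h = 0" "L h \<bullet> g = 0"
    using F2 hS adm_sym[OF L, of h g] by auto
  have orthJ: "\<forall>j\<in>J. \<forall>k\<in>J. (L \<circ> vb) j \<bullet> vb k = (if j = k then 1 else 0)"
    using orthL JK by blast
  have orth0J: "\<forall>j\<in>J. \<forall>k\<in>J. vb j \<bullet> vb k = (if j = k then 1 / lb j else 0)"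
    using orth0 JK by blast
  have Lhh: "L h \<bullet> h = (\<Sum>j\<in>J. c j * c j * 1)"
  proof -
    have "L h = (\<Sum>j\<in>J. c j *\<^sub>R (L \<circ> vb) j)"
      unfolding h_def by (simp add: real_vector.linear_sum[OF lin] real_vector.linear_scale[OF lin])
    then show ?thesis unfolding h_def[of] using orth_sum[OF finJ orthJ, of c c] by (simp add: h_def)
  qed
  have hh: "h \<bullet> h = (\<Sum>j\<in>J. c j * c j * (1 / lb j))"
    unfolding h_def by (rule orth_sum[OF finJ orth0J])
  define a where "a j = g \<bullet> vb j" for j
  have aj: "a j = c j * (1 / lam - 1 / lb j)" if "j \<in> K" for j
  proof -
    have "v \<bullet> vb j = c j / lam" using eigv lam0 by (simp add: c_def field_simps)
    moreover have "Pv \<bullet> vb j = c j * (1 / lb j)" unfolding Pv_def by (rule orth_sum1[OF finK orth0 that])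
    ultimately show ?thesis by (simp add: a_def g_def inner_diff_left algebra_simps)
  qed
  have bessel: "(\<Sum>j\<in>K. lb j * (a j)^2) \<le> g \<bullet> g"
  proof -
    define q where "q = (\<Sum>j\<in>K. (lb j * a j) *\<^sub>R vb j)"
    have qq: "q \<bullet> q = (\<Sum>j\<in>K. lb j * (a j)^2)"
      unfolding q_def using orth_sum[OF finK orth0, of "\<lambda>j. lb j * a j" "\<lambda>j. lb j * a j"] lbpos
      by (auto simp: power2_eq_square intro!: sum.cong)
    have gq: "q \<bullet> g = (\<Sum>j\<in>K. lb j * (a j)^2)"
      unfolding q_def inner_sum_left a_def by (simp add: power2_eq_square inner_commute mult.assoc)
    have "0 \<le> (g - q) \<bullet> (g - q)" by simp
    also have "\<dots> = g \<bullet> g - 2 * (q \<bullet> g) + q \<bullet> q"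
      by (simp add: inner_diff_left inner_diff_right inner_commute)
    finally show ?thesis using qq gq by simp
  qed
  have dlset: "{\<bar>1 / lb j - 1 / lam\<bar> | j. j \<in> {1..N} \<and> j \<noteq> i} = (\<lambda>j. \<bar>1 / lb j - 1 / lam\<bar>) ` J"
    unfolding J_def K_def by auto
  have dlle: "dl \<le> \<bar>1 / lb j - 1 / lam\<bar>" if "j \<in> J" for j
    unfolding dl_def dlset using finJ that by (intro Min_le) auto
  have dlpos: "dl > 0" using gap unfolding dl_def .
  have cdl: "(c j)^2 \<le> lb j * (a j)^2 / (l1 * dl^2)" if "j \<in> J" for j
  proof -
    have jK: "j \<in> K" using that JK by blast
    have "\<bar>c j\<bar> * dl \<le> \<bar>c j\<bar> * \<bar>1 / lb j - 1 / lam\<bar>"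
      using dlle[OF that] by (simp add: mult_left_mono)
    also have "\<dots> = \<bar>a j\<bar>" using aj[OF jK] by (simp add: abs_mult abs_minus_commute)
    finally have "(\<bar>c j\<bar> * dl)^2 \<le> (\<bar>a j\<bar>)^2" using dlpos by (intro power_mono) auto
    then have "(c j)^2 * dl^2 \<le> (a j)^2" by (simp add: power_mult_distrib)
    then have "(c j)^2 \<le> (a j)^2 / dl^2" using dlpos by (simp add: field_simps)
    also have "\<dots> \<le> lb j * (a j)^2 / (l1 * dl^2)"
    proof -
      have "l1 * (a j)^2 \<le> lb j * (a j)^2" by (rule mult_right_mono[OF l1lb[OF jK]]) simp
      then show ?thesis using dlpos l1pos by (simp add: field_simps)
    qed
    finally show ?thesis .
  qed
  have pos2: "0 < l1 * dl^2" using l1pos dlpos by simp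
  have sumA: "(\<Sum>j\<in>J. (c j)^2) \<le> (g \<bullet> g) / (l1 * dl^2)"
  proof -
    have "(\<Sum>j\<in>J. (c j)^2) \<le> (\<Sum>j\<in>J. lb j * (a j)^2 / (l1 * dl^2))"
      using cdl by (rule sum_mono)
    also have "\<dots> \<le> (\<Sum>j\<in>K. lb j * (a j)^2 / (l1 * dl^2))"
      using finK JK by (intro sum_mono2)
        (auto intro!: divide_nonneg_pos mult_nonneg_nonneg less_imp_le[OF lbpos] pos2)
    also have "\<dots> = (\<Sum>j\<in>K. lb j * (a j)^2) / (l1 * dl^2)" by (simp add: sum_divide_distrib)
    also have "\<dots> \<le> (g \<bullet> g) / (l1 * dl^2)" using bessel l1pos dlpos
      by (intro divide_right_mono) auto
    finally show ?thesis .
  qed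
  have sumD: "h \<bullet> h \<le> (g \<bullet> g) / (l1 * dl)^2"
  proof -
    have "h \<bullet> h \<le> (\<Sum>j\<in>J. (c j)^2 / l1)" unfolding hh
    proof (rule sum_mono)
      fix j assume "j \<in> J"
      then have jK: "j \<in> K" using JK by blast
      have "(c j)^2 / lb j \<le> (c j)^2 / l1"
        using l1lb[OF jK] l1pos by (intro divide_left_mono) auto
      then show "c j * c j * (1 / lb j) \<le> (c j)^2 / l1" by (simp add: power2_eq_square)
    qed
    also have "\<dots> = (\<Sum>j\<in>J. (c j)^2) / l1" by (simp add: sum_divide_distrib)
    also have "\<dots> \<le> (g \<bullet> g) / (l1 * dl^2) / l1" using sumA l1pos by (intro divide_right_mono) auto
    also have "\<dots> = (g \<bullet> g) / (l1 * dl)^2" by (simp add: power2_eq_square)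
    finally show ?thesis .
  qed
  have AN: "norm g \<le> et * enorm L g" unfolding et_def by (rule aubin_nitsche[OF L subS F2])
  have etnn: "0 \<le> et" unfolding et_def by (rule eta_nonneg[OF L subS])
  have egnn: "0 \<le> enorm L g" by (rule enorm_nonneg[OF L])
  have dapp: "enorm L g \<le> delta_approx L S lam"
  proof -
    have vmem: "v \<in> {u \<in> eigenspace L lam. enorm L u = 1}"
      using eigv vv by (simp add: eigenspace_def energy_def enorm_def)
    have le: "enorm L g \<le> enorm L (v - w)" if w: "w \<in> S" for w
    proof -
      define p where "p = Pv - w"
      have pS: "p \<in> S" unfolding p_def by (rule subspace_diff[OF subS PvS w])
      have vw: "v - w = g + p" unfolding p_def g_def by simp
      have "L g \<bullet> p = 0" using F2 pS by blast
      moreover have "L p \<bullet> g = L g \<bullet> p" by (rule adm_sym[OF L])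
      ultimately have "L (g + p) \<bullet> (g + p) = L g \<bullet> g + L p \<bullet> p"
        by (simp add: real_vector.linear_add[OF lin] inner_add_left inner_add_right)
      then have "L g \<bullet> g \<le> L (v - w) \<bullet> (v - w)" using vw adm_nonneg[OF L, of p] by simp
      then show ?thesis unfolding enorm_def energy_def by (rule real_sqrt_le_mono)
    qed
    have "enorm L g \<le> (INF w\<in>S. enorm L (v - w))"
      by (rule cINF_greatest) (use le subspace_0[OF subS] in auto)
    also have "\<dots> \<le> delta_approx L S lam" unfolding delta_approx_def
    proof (rule cSUP_upper[OF vmem])
      show "bdd_above ((\<lambda>u. INF w\<in>S. enorm L (u - w)) ` {u \<in> eigenspace L lam. enorm L u = 1})"
      proof (rule bdd_aboveI[of _ 1])
        fix r assume "r \<in> (\<lambda>u. INF w\<in>S. enorm L (u - w)) ` {u \<in> eigenspace L lam. enorm L u = 1}"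
        then obtain u where u: "enorm L u = 1" "r = (INF w\<in>S. enorm L (u - w))" by blast
        have "r \<le> enorm L (u - 0)" unfolding u(2)
          by (rule cINF_lower) (auto intro: bdd_belowI[of _ 0] enorm_nonneg[OF L] subspace_0[OF subS])
        then show "r \<le> 1" using u by simp
      qed
    qed
    finally show ?thesis .
  qed
  have Lhhnn: "0 \<le> L h \<bullet> h" by (rule adm_nonneg[OF L])
  have eg2: "(enorm L (g + h))^2 = (enorm L g)^2 + L h \<bullet> h"
    using Lgh by (simp add: enorm_sq[OF L] real_vector.linear_add[OF lin] inner_add_left inner_add_right)
  have Lhh': "L h \<bullet> h = (\<Sum>j\<in>J. (c j)^2)" using Lhh by (simp add: power2_eq_square)
  have gg: "g \<bullet> g \<le> et^2 * (enorm L g)^2"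
  proof -
    have "(norm g)^2 \<le> (et * enorm L g)^2" using AN by (intro power_mono) auto
    then show ?thesis by (simp add: power2_norm_eq_inner power_mult_distrib)
  qed
  have egh: "enorm L g \<le> enorm L (g + h)"
  proof -
    have "(enorm L g)^2 \<le> (enorm L (g + h))^2" using eg2 Lhhnn by simp
    then show ?thesis using enorm_nonneg[OF L, of "g + h"] by (rule power2_le_imp_le)
  qed
  have claim1: "enorm L (g + h) \<le> sqrt (1 + et^2 / (l1 * dl^2)) * delta_approx L S lam"
  proof -
    have "(enorm L (g + h))^2 \<le> (enorm L g)^2 + (g \<bullet> g) / (l1 * dl^2)"
      using eg2 Lhh' sumA by simp
    also have "\<dots> \<le> (enorm L g)^2 + et^2 * (enorm L g)^2 / (l1 * dl^2)"
      using gg pos2 by (simp add: divide_right_mono)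
    also have "\<dots> = (1 + et^2 / (l1 * dl^2)) * (enorm L g)^2" by (simp add: field_simps)
    finally have "sqrt ((enorm L (g + h))^2) \<le> sqrt ((1 + et^2 / (l1 * dl^2)) * (enorm L g)^2)"
      by (rule real_sqrt_le_mono)
    then have "enorm L (g + h) \<le> sqrt (1 + et^2 / (l1 * dl^2)) * enorm L g"
      using enorm_nonneg[OF L, of "g + h"] egnn by (simp add: real_sqrt_mult)
    also have "\<dots> \<le> sqrt (1 + et^2 / (l1 * dl^2)) * delta_approx L S lam"
      by (rule mult_left_mono[OF dapp]) (use pos2 in simp)
    finally show ?thesis .
  qed
  have pos1: "0 < l1 * dl" using l1pos dlpos by simp
  have nh: "norm h \<le> norm g / (l1 * dl)"
  proof -
    have "norm h = sqrt (h \<bullet> h)" by (rule norm_eq_sqrt_inner)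
    also have "\<dots> \<le> sqrt ((g \<bullet> g) / (l1 * dl)^2)" using sumD by (rule real_sqrt_le_mono)
    also have "\<dots> = sqrt (g \<bullet> g) / sqrt ((l1 * dl)^2)" by (rule real_sqrt_divide)
    also have "sqrt (g \<bullet> g) = norm g" by (rule norm_eq_sqrt_inner[symmetric])
    also have "sqrt ((l1 * dl)^2) = l1 * dl" using pos1 by (subst real_sqrt_abs) simp
    finally show ?thesis .
  qed
  have claim2: "norm (g + h) \<le> (1 + 1 / (l1 * dl)) * et * enorm L (g + h)"
  proof -
    have "norm (g + h) \<le> norm g + norm h" by (rule norm_triangle_ineq)
    also have "\<dots> \<le> (1 + 1 / (l1 * dl)) * norm g" using nh by (simp add: algebra_simps)
    also have "\<dots> \<le> (1 + 1 / (l1 * dl)) * (et * enorm L g)"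
      using AN pos1 by (intro mult_left_mono) auto
    also have "\<dots> \<le> (1 + 1 / (l1 * dl)) * (et * enorm L (g + h))"
      using egh etnn pos1 by (intro mult_left_mono) auto
    finally show ?thesis by (simp add: mult.assoc)
  qed
  have n1: "enorm L (E v - v) = enorm L (g + h)" unfolding eq enorm_scale[OF L] by simp
  have n2: "norm (E v - v) = norm (g + h)" unfolding eq norm_scaleR by simp
  show ?thesis unfolding dl_def[symmetric] l1_def[symmetric] et_def[symmetric] n1 n2
    using claim1 claim2 by simp
qed

end
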